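(* Let $\kappa\in\{-1,0,1\}$ and let $\mathbb{M}^3(\kappa)$ be represented as $\mathbb{R}^3$ (for $\kappa=0$), $\{x_3>0\}$ (for $\kappa=-1$) or $\mathbb{R}^3$ identified with $\mathbb{S}^3$ minus a point (for $\kappa=1$), with metric $g_\kappa=\eta_\kappa(x)(dx_1^2+dx_2^2+dx_3^2)$, where $\eta_{-1}=1/x_3^2$, $\eta_0=1$, $\eta_1=4/(1+x_1^2+x_2^2+x_3^2)^2$. Let $E$ be the end of revolution $f(s,\theta)=(\gamma_1(s)\cos\theta,\gamma_1(s)\sin\theta,\gamma_2(s))$, $s\in[0,\infty)$, $\theta\in[0,2\pi]$, where $\gamma(s)=(\gamma_1(s),0,\gamma_2(s))$ is a regular curve parametrized by arc length with respect to $g_\kappa$ and $\gamma_1>0$. Define $w_{-1}=\gamma_1/\gamma_2$, $w_0=\gamma_1$, $w_1=\frac{2\gamma_1}{1+\gamma_1^2+\gamma_2^2}$. If $\int^\infty\frac{t\,dt}{\int_0^t w_\kappa(s)\,ds}=\infty$, then $E$ is parabolic.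
   Context: $E$ carries the metric induced by the immersion $f$, which equals $ds^2+w_\kappa(s)^2d\theta^2$. An end is parabolic if every bounded harmonic function on it is determined by its boundary values. *)

theory Defs
  imports "HOL-Analysis.Analysis"
begin

definition eta :: "int \<Rightarrow> real \<Rightarrow> real \<Rightarrow> real \<Rightarrow> real" where
  "eta \<kappa> x1 x2 x3 =
     (if \<kappa> = -1 then 1 / x3^2
      else if \<kappa> = 0 then 1
      else 4 / (1 + x1^2 + x2^2 + x3^2)^2)"

text \<open>The warping function w_kappa of the induced metric ds^2 + w_kappa(s)^2 dtheta^2.\<close>
definition wk :: "int \<Rightarrow> (real \<Rightarrow> real) \<Rightarrow> (real \<Rightarrow> real) \<Rightarrow> real \<Rightarrow> real" where
  "wk \<kappa> g1 g2 s =
     (if \<kappa> = -1 then g1 s / g2 s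
      else if \<kappa> = 0 then g1 s
      else 2 * g1 s / (1 + (g1 s)^2 + (g2 s)^2))"

definition smooth_on :: "real set \<Rightarrow> (real \<Rightarrow> real) \<Rightarrow> (nat \<Rightarrow> real \<Rightarrow> real) \<Rightarrow> bool" where
  "smooth_on S g D \<longleftrightarrow> D 0 = g \<and>
     (\<forall>n. \<forall>x\<in>S. (D n has_real_derivative D (Suc n) x) (at x within S))"

text \<open>The end E = [0,\<infinity>) \<times> (R / 2\<pi>Z) in coordinates (s,\<theta>); functions on E are
  functions of (s,\<theta>), 2\<pi>-periodic in \<theta>. Harmonic on the interior s > 0 w.r.t. the metric
  ds^2 + w(s)^2 d\<theta>^2: u is C^2 and
  Delta u = (1/w) d/ds (w du/ds) + (1/w^2) d^2u/d\<theta>^2 = 0.\<close>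
definition harmonic_end :: "(real \<Rightarrow> real) \<Rightarrow> (real \<times> real \<Rightarrow> real) \<Rightarrow> bool" where
  "harmonic_end w u \<longleftrightarrow>
    (\<exists>us ut uss ust utt.
       continuous_on ({0<..} \<times> UNIV) us \<and> continuous_on ({0<..} \<times> UNIV) ut \<and>
       continuous_on ({0<..} \<times> UNIV) uss \<and> continuous_on ({0<..} \<times> UNIV) ust \<and>
       continuous_on ({0<..} \<times> UNIV) utt \<and>
       (\<forall>s>0. \<forall>\<theta>.
          ((\<lambda>r. u (r, \<theta>)) has_real_derivative us (s, \<theta>)) (at s) \<and>
          ((\<lambda>t. u (s, t)) has_real_derivative ut (s, \<theta>)) (at \<theta>) \<and>
          ((\<lambda>r. us (r, \<theta>)) has_real_derivative uss (s, \<theta>)) (at s) \<and>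
          ((\<lambda>t. us (s, t)) has_real_derivative ust (s, \<theta>)) (at \<theta>) \<and>
          ((\<lambda>r. ut (r, \<theta>)) has_real_derivative ust (s, \<theta>)) (at s) \<and>
          ((\<lambda>t. ut (s, t)) has_real_derivative utt (s, \<theta>)) (at \<theta>) \<and>
          ((\<lambda>r. w r * us (r, \<theta>)) has_real_derivative (- utt (s, \<theta>) / w s)) (at s)))"

definition bdd_harmonic_end :: "(real \<Rightarrow> real) \<Rightarrow> (real \<times> real \<Rightarrow> real) \<Rightarrow> bool" where
  "bdd_harmonic_end w u \<longleftrightarrow>
     continuous_on ({0..} \<times> UNIV) u \<and>
     (\<forall>s\<ge>0. \<forall>\<theta>. u (s, \<theta> + 2 * pi) = u (s, \<theta>)) \<and>
     bounded (u ` ({0..} \<times> UNIV)) \<and>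
     harmonic_end w u"

definition parabolic_end :: "(real \<Rightarrow> real) \<Rightarrow> bool" where
  "parabolic_end w \<longleftrightarrow>
     (\<forall>u v. bdd_harmonic_end w u \<longrightarrow> bdd_harmonic_end w v \<longrightarrow>
        (\<forall>\<theta>. u (0, \<theta>) = v (0, \<theta>)) \<longrightarrow>
        (\<forall>s\<ge>0. \<forall>\<theta>. u (s, \<theta>) = v (s, \<theta>)))"

end

theory Submission
  imports Defs
begin


lemma int_deriv:
  assumes c: "\<And>b. continuous_on {0..b} (f::real\<Rightarrow>real)" and r: "0 < r"
  shows "((\<lambda>s. integral {0..s} f) has_real_derivative f r) (at r)"
proof -
  have "((\<lambda>s. integral {0..s} f) has_real_derivative f r) (at r within {0..r+1})"
    by (rule integral_has_real_derivative[OF c]) (use r in auto)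
  moreover have "at r within {0..r+1} = at r"
    by (rule at_within_interior) (use r in auto)
  ultimately show ?thesis by simp
qed

lemma int_cont:
  assumes c: "\<And>b. continuous_on {0..b} (f::real\<Rightarrow>real)"
  shows "continuous_on {0..b} (\<lambda>s. integral {0..s} f)"
  by (rule indefinite_integral_continuous_1[OF integrable_continuous_real[OF c]])

lemma perk:
  assumes per: "\<forall>s\<ge>0. \<forall>\<theta>. u (s, \<theta> + 2 * pi) = u (s, \<theta>)" and s: "s \<ge> 0"
  shows "u (s, \<theta> + 2*pi * of_int k) = (u (s,\<theta>)::real)"
proof (induct k rule: int_induct[where k=0])
  case base then show ?case by simp
next
  case (step1 i)
  have "u (s, \<theta> + 2*pi * of_int (i+1)) = u (s, (\<theta> + 2*pi * of_int i) + 2*pi)"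
    by (simp add: algebra_simps)
  also have "\<dots> = u (s, \<theta> + 2*pi * of_int i)" using per s by blast
  finally show ?case using step1 by simp
next
  case (step2 i)
  have "u (s, \<theta> + 2*pi * of_int i) = u (s, (\<theta> + 2*pi * of_int (i - 1)) + 2*pi)"
    by (simp add: algebra_simps)
  also have "\<dots> = u (s, \<theta> + 2*pi * of_int (i - 1))" using per s by blast
  finally show ?case using step2 by simp
qed

lemma red:
  assumes per: "\<forall>s\<ge>0. \<forall>\<theta>. u (s, \<theta> + 2 * pi) = u (s, \<theta>)" and s: "s \<ge> 0"
  shows "\<exists>\<theta>'\<in>{0..2*pi}. u (s,\<theta>) = (u (s,\<theta>')::real)"
proof -
  define k where "k = \<lfloor>\<theta>/(2*pi)\<rfloor>"
  define t where "t = \<theta> - 2*pi * of_int k"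
  have "of_int k \<le> \<theta>/(2*pi)" "\<theta>/(2*pi) < of_int k + 1" unfolding k_def by linarith+
  hence "2*pi * of_int k \<le> \<theta>" "\<theta> < 2*pi*(of_int k + 1)"
    using pi_gt_zero by (simp_all add: field_simps)
  hence "t \<in> {0..2*pi}" unfolding t_def by (auto simp: algebra_simps)
  moreover have "u (s, t + 2*pi * of_int k) = u (s,t)" by (rule perk[OF per s])
  hence "u (s,\<theta>) = u (s,t)" unfolding t_def by simp
  ultimately show ?thesis by blast
qed


lemma mp:
  fixes w :: "real \<Rightarrow> real" and u :: "real \<times> real \<Rightarrow> real"
  assumes wc: "continuous_on {0..} w" and wp: "\<And>s. s \<ge> 0 \<Longrightarrow> w s > 0"
    and unb: "\<And>B s0. \<exists>R>s0. integral {0..R} (\<lambda>r. 1 / w r) > B"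
    and hu: "bdd_harmonic_end w u" and u0: "\<And>\<theta>. u (0,\<theta>) = 0"
    and s1: "s1 \<ge> 0"
  shows "u (s1,\<theta>1) \<le> 0"
proof (rule ccontr)
  assume neg: "\<not> u (s1,\<theta>1) \<le> 0"
  define a where "a = u (s1,\<theta>1)"
  have apos: "a > 0" using neg unfolding a_def by simp
  have cont: "continuous_on ({0..} \<times> UNIV) u" and per: "\<forall>s\<ge>0. \<forall>\<theta>. u (s, \<theta> + 2 * pi) = u (s, \<theta>)"
    and bdd: "bounded (u ` ({0..} \<times> UNIV))" and harm: "harmonic_end w u"
    using hu unfolding bdd_harmonic_end_def by auto
  from harm obtain us ut uss ust utt where H: "\<forall>s>0. \<forall>\<theta>.
          ((\<lambda>r. u (r, \<theta>)) has_real_derivative us (s, \<theta>)) (at s) \<and>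
          ((\<lambda>t. u (s, t)) has_real_derivative ut (s, \<theta>)) (at \<theta>) \<and>
          ((\<lambda>r. us (r, \<theta>)) has_real_derivative uss (s, \<theta>)) (at s) \<and>
          ((\<lambda>t. us (s, t)) has_real_derivative ust (s, \<theta>)) (at \<theta>) \<and>
          ((\<lambda>r. ut (r, \<theta>)) has_real_derivative ust (s, \<theta>)) (at s) \<and>
          ((\<lambda>t. ut (s, t)) has_real_derivative utt (s, \<theta>)) (at \<theta>) \<and>
          ((\<lambda>r. w r * us (r, \<theta>)) has_real_derivative (- utt (s, \<theta>) / w s)) (at s)"
    unfolding harmonic_end_def by blast
  obtain M where M: "\<And>x. x\<in>{0..} \<times> UNIV \<Longrightarrow> \<bar>u x\<bar> \<le> M"
    using bdd unfolding bounded_iff by auto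
  define Phi where "Phi s = integral {0..s} (\<lambda>r. 1 / w r)" for s
  define W where "W s = integral {0..s} w" for s
  define Psi where "Psi s = integral {0..s} (\<lambda>r. W r / w r)" for s
  have cw: "\<And>b. continuous_on {0..b} w" using wc by (rule continuous_on_subset) auto
  have wnz: "\<And>b x. x \<in> {0..b} \<Longrightarrow> w x \<noteq> 0" using wp by fastforce
  have c1: "\<And>b. continuous_on {0..b} (\<lambda>r. 1 / w r)"
    by (intro continuous_on_divide continuous_on_const cw) (use wnz in blast)
  have cW: "\<And>b. continuous_on {0..b} W" unfolding W_def by (rule int_cont[OF cw])
  have c2: "\<And>b. continuous_on {0..b} (\<lambda>r. W r / w r)"
    by (intro continuous_on_divide cW cw) (use wnz in blast)
  have cPhi: "\<And>b. continuous_on {0..b} Phi" unfolding Phi_def by (rule int_cont[OF c1])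
  have cPsi: "\<And>b. continuous_on {0..b} Psi" unfolding Psi_def by (rule int_cont[OF c2])
  have dPhi: "\<And>r. r > 0 \<Longrightarrow> (Phi has_real_derivative 1 / w r) (at r)"
    unfolding Phi_def by (rule int_deriv[OF c1])
  have dW: "\<And>r. r > 0 \<Longrightarrow> (W has_real_derivative w r) (at r)"
    unfolding W_def by (rule int_deriv[OF cw])
  have dPsi: "\<And>r. r > 0 \<Longrightarrow> (Psi has_real_derivative W r / w r) (at r)"
    unfolding Psi_def by (rule int_deriv[OF c2])
  have Phi0: "Phi 0 = 0" and Psi0: "Psi 0 = 0" unfolding Phi_def Psi_def by simp_all
  define \<epsilon> where "\<epsilon> = a / (4*(\<bar>Phi s1\<bar> + 1))"
  have epos: "\<epsilon> > 0" unfolding \<epsilon>_def using apos by (simp add: add_pos_nonneg)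
  have e1: "\<epsilon> * \<bar>Phi s1\<bar> \<le> a/4"
  proof -
    have "\<epsilon> * \<bar>Phi s1\<bar> = (a/4) * (\<bar>Phi s1\<bar> / (\<bar>Phi s1\<bar> + 1))"
      unfolding \<epsilon>_def by (simp add: field_simps)
    also have "\<dots> \<le> (a/4) * 1" using apos by (intro mult_left_mono) auto
    finally show ?thesis by simp
  qed
  obtain R where R: "R > s1" "Phi R > (M+1)/\<epsilon>" using unb unfolding Phi_def by blast
  have R2: "\<epsilon> * Phi R > M + 1" using R(2) epos by (simp add: field_simps)
  define \<delta> where "\<delta> = min a 1 / (4*(\<bar>Psi s1\<bar> + \<bar>Psi R\<bar> + 1))"
  have dpos: "\<delta> > 0" unfolding \<delta>_def using apos by (simp add: add_pos_nonneg)
  have dle: "\<delta> * \<bar>Psi x\<bar> \<le> min a 1 / 4" if "x = s1 \<or> x = R" for x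
  proof -
    have "\<delta> * \<bar>Psi x\<bar> = (min a 1/4) * (\<bar>Psi x\<bar> / (\<bar>Psi s1\<bar> + \<bar>Psi R\<bar> + 1))"
      unfolding \<delta>_def by (simp add: field_simps)
    also have "\<dots> \<le> (min a 1/4) * 1" using apos that by (intro mult_left_mono) auto
    finally show ?thesis by simp
  qed
  define v where "v p = u p - \<epsilon> * Phi (fst p) + \<delta> * Psi (fst p)" for p
  define K where "K = {0..R} \<times> {0..2*pi}"
  have Ksub: "K \<subseteq> {0..} \<times> UNIV" unfolding K_def by auto
  have cv: "continuous_on K v"
  proof -
    have fK: "fst ` K \<subseteq> {0..R}" unfolding K_def by auto
    have "continuous_on K u" using cont Ksub by (rule continuous_on_subset)
    moreover have "continuous_on K (\<lambda>p. Phi (fst p))"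
      by (rule continuous_on_compose2[OF cPhi _ fK]) (intro continuous_intros)
    moreover have "continuous_on K (\<lambda>p. Psi (fst p))"
      by (rule continuous_on_compose2[OF cPsi _ fK]) (intro continuous_intros)
    ultimately show ?thesis unfolding v_def by (intro continuous_intros)
  qed
  have "compact K" unfolding K_def by (intro compact_Times compact_Icc)
  moreover have "K \<noteq> {}" unfolding K_def using R s1 by auto
  ultimately obtain p0 where p0: "p0 \<in> K" "\<And>y. y \<in> K \<Longrightarrow> v y \<le> v p0"
    using continuous_attains_sup[OF _ _ cv] by blast
  obtain s0 \<theta>0 where p0e: "p0 = (s0,\<theta>0)" by (cases p0)
  have s0R: "s0 \<in> {0..R}" using p0 p0e K_def by auto
  have hv: "v (s,\<theta>) \<le> v (s0,\<theta>0)" if sR: "s \<in> {0..R}" for s \<theta>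
  proof -
    obtain t where t: "t \<in> {0..2*pi}" "u (s,\<theta>) = u (s,t)" using red[OF per, of s \<theta>] sR by auto
    have "v (s,\<theta>) = v (s,t)" unfolding v_def using t by simp
    also have "\<dots> \<le> v (s0,\<theta>0)" using p0(2)[of "(s,t)"] sR t p0e unfolding K_def by auto
    finally show ?thesis .
  qed
  have "v (s1,\<theta>1) > 0"
  proof -
    have "\<epsilon> * Phi s1 \<le> \<epsilon> * \<bar>Phi s1\<bar>" using epos by (intro mult_left_mono) auto
    hence "- \<epsilon> * Phi s1 \<ge> - (a/4)" using e1 by linarith
    moreover have "\<delta> * (- \<bar>Psi s1\<bar>) \<le> \<delta> * Psi s1" using dpos by (intro mult_left_mono) auto
    hence "\<delta> * Psi s1 \<ge> - (a/4)" using dle[of s1] by (simp add: min_def split: if_splits)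
    ultimately show ?thesis unfolding v_def a_def[symmetric] using apos by simp
  qed
  hence vpos: "v (s0,\<theta>0) > 0" using hv[of s1 \<theta>1] R s1 by force
  have "s0 \<noteq> 0"
  proof
    assume "s0 = 0" then show False using vpos u0 Phi0 Psi0 unfolding v_def by simp
  qed
  moreover have "s0 \<noteq> R"
  proof
    assume "s0 = R"
    have "u (R,\<theta>0) \<le> M" using M[of "(R,\<theta>0)"] R s1 by auto
    moreover have "\<delta> * Psi R \<le> \<delta> * \<bar>Psi R\<bar>" using dpos by (intro mult_left_mono) auto
    hence "\<delta> * Psi R \<le> 1/4" using dle[of R] by (simp add: min_def split: if_splits)
    ultimately have "v (R,\<theta>0) < 0" unfolding v_def using R2 by simp
    then show False using vpos \<open>s0 = R\<close> by simp
  qed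
  ultimately have s0pos: "0 < s0" "s0 < R" using s0R by auto
  note Hs0 = H[rule_format, OF s0pos(1)]
  have umaxt: "u (s0,t) \<le> u (s0,\<theta>0)" for t
    using hv[of s0 t] s0R unfolding v_def by simp
  have ut0: "ut (s0,\<theta>0) = 0"
    by (rule DERIV_local_max[OF conjunct1[OF conjunct2[OF Hs0[of \<theta>0]]], of 1]) (use umaxt in auto)
  have utt0: "utt (s0,\<theta>0) \<le> 0"
  proof (rule ccontr)
    assume "\<not> ?thesis"
    hence "utt (s0,\<theta>0) > 0" by simp
    then obtain d where d: "d > 0" "\<And>h. h > 0 \<Longrightarrow> h < d \<Longrightarrow> ut (s0,\<theta>0) < ut (s0, \<theta>0 + h)"
      using DERIV_pos_inc_right[of "\<lambda>t. ut (s0,t)" "utt (s0,\<theta>0)" \<theta>0] Hs0[of \<theta>0] by blast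
    have dt: "\<And>t. ((\<lambda>t. u (s0, t)) has_real_derivative ut (s0, t)) (at t)" using Hs0 by blast
    have "u (s0,\<theta>0) < u (s0, \<theta>0 + d/2)"
    proof (rule DERIV_pos_imp_increasing_open[where f="\<lambda>t. u (s0,t)", simplified])
      show "\<theta>0 < \<theta>0 + d/2" using d by simp
      fix x assume "\<theta>0 < x" "x < \<theta>0 + d/2"
      then have "ut (s0,\<theta>0) < ut (s0, \<theta>0 + (x - \<theta>0))" using d by (intro d(2)) auto
      then show "\<exists>y. ((\<lambda>t. u (s0, t)) has_real_derivative y) (at x) \<and> 0 < y"
        using dt[of x] ut0 by auto
    next
      show "continuous_on {\<theta>0..\<theta>0 + d / 2} (\<lambda>t. u (s0, t))"
        using dt by (intro continuous_at_imp_continuous_on ballI DERIV_isCont) blast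
    qed
    then show False using umaxt[of "\<theta>0 + d/2"] by simp
  qed
  define F where "F r = v (r,\<theta>0)" for r
  define F' where "F' r = us (r,\<theta>0) - \<epsilon> * (1 / w r) + \<delta> * (W r / w r)" for r
  have dF: "(F has_real_derivative F' r) (at r)" if "r > 0" for r
    unfolding F_def v_def F'_def fst_conv
    using H[rule_format, OF that, of \<theta>0] dPhi[OF that] dPsi[OF that]
    by (intro DERIV_add DERIV_diff DERIV_cmult) auto
  define G where "G r = w r * us (r,\<theta>0) - \<epsilon> + \<delta> * W r" for r
  have GF: "G r = w r * F' r" if "r > 0" for r
    unfolding G_def F'_def using wp[of r] that by (simp add: field_simps)
  have F'0: "F' s0 = 0"
  proof (rule DERIV_local_max[OF dF[OF s0pos(1)], of "min s0 (R - s0)"])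
    show "0 < min s0 (R - s0)" using s0pos by simp
    show "\<forall>y. \<bar>s0 - y\<bar> < min s0 (R - s0) \<longrightarrow> F y \<le> F s0"
      unfolding F_def
    proof (intro allI impI)
      fix y assume "\<bar>s0 - y\<bar> < min s0 (R - s0)"
      then have "y \<in> {0..R}" by (auto simp: abs_less_iff)
      then show "v (y,\<theta>0) \<le> v (s0,\<theta>0)" by (rule hv)
    qed
  qed
  have G0: "G s0 = 0" using GF[OF s0pos(1)] F'0 by simp
  have dG: "(G has_real_derivative (- utt (s0,\<theta>0) / w s0 + \<delta> * w s0)) (at s0)"
  proof -
    have d1: "((\<lambda>r. w r * us (r,\<theta>0)) has_real_derivative (- utt (s0,\<theta>0) / w s0)) (at s0)"
      using Hs0[of \<theta>0] by simp
    have "(G has_real_derivative (- utt (s0,\<theta>0) / w s0 - 0 + \<delta> * w s0)) (at s0)"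
      unfolding G_def by (rule DERIV_add[OF DERIV_diff[OF d1 DERIV_const] DERIV_cmult[OF dW[OF s0pos(1)]]])
    then show ?thesis by simp
  qed
  have "- utt (s0,\<theta>0) / w s0 + \<delta> * w s0 > 0"
    using utt0 wp[of s0] s0pos dpos by (intro add_nonneg_pos) (auto simp: divide_nonpos_pos)
  then obtain d where d: "d > 0" "\<And>h. h > 0 \<Longrightarrow> h < d \<Longrightarrow> G s0 < G (s0 + h)"
    using DERIV_pos_inc_right[OF dG] by blast
  obtain m where hm: "m \<le> R - s0" "m \<le> d" "m > 0"
    using d(1) s0pos by (intro that[of "min d (R - s0)"]) auto
  define h where "h = m / 2"
  have h1: "h > 0" unfolding h_def using hm by simp
  have h2: "h < d" unfolding h_def using hm by linarith
  have h3: "s0 + h \<le> R" unfolding h_def using hm by linarith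
  note h = h1 h2 h3
  have "F s0 < F (s0 + h)"
  proof (rule DERIV_pos_imp_increasing_open[where f=F])
    show "s0 < s0 + h" using h by simp
    fix x assume x: "s0 < x" "x < s0 + h"
    then have "G s0 < G (s0 + (x - s0))" using h by (intro d(2)) auto
    hence "G x > 0" using G0 by simp
    hence "F' x > 0" using GF[of x] x s0pos wp[of x] by (simp add: zero_less_mult_iff)
    then show "\<exists>y. (F has_real_derivative y) (at x) \<and> 0 < y"
      using dF[of x] x s0pos by auto
  next
    show "continuous_on {s0..s0 + h} F"
    proof (intro continuous_at_imp_continuous_on ballI)
      fix x assume "x \<in> {s0..s0+h}" then have "x > 0" using s0pos by auto
      then show "isCont F x" by (rule DERIV_isCont[OF dF])
    qed
  qed
  moreover have "F (s0 + h) \<le> F s0" unfolding F_def using hv[of "s0+h" \<theta>0] h s0pos by auto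
  ultimately show False by simp
qed



lemma pow2_ivl:
  assumes "(t::real) \<ge> 1" shows "\<exists>k::nat. 2^k \<le> t \<and> t < 2^(k+1)"
proof -
  have ex: "\<exists>n. t < (2::real)^n" by (rule real_arch_pow) simp
  define n where "n = (LEAST n. t < (2::real)^n)"
  have tn: "t < 2^n" unfolding n_def by (rule LeastI_ex[OF ex])
  have "n \<noteq> 0"
  proof
    assume "n = 0" with tn assms show False by simp
  qed
  then obtain k where k: "n = Suc k" by (cases n) auto
  have "\<not> t < 2^k" unfolding n_def by (rule not_less_Least) (use k n_def in simp)
  then show ?thesis using tn k by (intro exI[of _ k]) auto
qed

lemma div_unb:
  fixes w :: "real \<Rightarrow> real"
  assumes wc: "continuous_on {0..} w" and wp: "\<And>s. s \<ge> 0 \<Longrightarrow> w s > 0"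
    and dv: "(\<integral>\<^sup>+ t\<in>{1..}. ennreal (t / integral {0..t} w) \<partial>lborel) = \<infinity>"
  shows "\<exists>R>s0. integral {0..R} (\<lambda>r. 1 / w r) > B"
proof (rule ccontr)
  assume "\<not> ?thesis"
  hence nb: "\<And>R. R > s0 \<Longrightarrow> integral {0..R} (\<lambda>r. 1 / w r) \<le> B" by (simp add: not_less) (meson not_le)
  define Phi where "Phi s = integral {0..s} (\<lambda>r. 1 / w r)" for s
  define W where "W s = integral {0..s} w" for s
  have cw: "\<And>a b. a \<ge> 0 \<Longrightarrow> continuous_on {a..b} w" using wc by (rule continuous_on_subset) auto
  have c1: "\<And>a b. a \<ge> 0 \<Longrightarrow> continuous_on {a..b} (\<lambda>r. 1 / w r)"
    by (intro continuous_on_divide continuous_on_const cw) (use wp in \<open>fastforce simp: less_imp_neq[symmetric]\<close>)+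
  have iw: "\<And>a b. a \<ge> 0 \<Longrightarrow> w integrable_on {a..b}" by (rule integrable_continuous_real[OF cw])
  have i1: "\<And>a b. a \<ge> 0 \<Longrightarrow> (\<lambda>r. 1 / w r) integrable_on {a..b}"
    by (rule integrable_continuous_real[OF c1])
  have Wsplit: "W b = W a + integral {a..b} w" if "0 \<le> a" "a \<le> b" for a b
    unfolding W_def using Henstock_Kurzweil_Integration.integral_combine[OF that iw[of 0 b]] by simp
  have Psplit: "Phi b = Phi a + integral {a..b} (\<lambda>r. 1 / w r)" if "0 \<le> a" "a \<le> b" for a b
    unfolding Phi_def using Henstock_Kurzweil_Integration.integral_combine[OF that i1[of 0 b]] by simp
  have Iw0: "integral {a..b} w \<ge> 0" if "0 \<le> a" for a b
  proof (rule integral_nonneg[OF iw[OF that]])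
    fix x assume "x \<in> {a..b}" then have "x \<ge> 0" using that by auto
    then show "0 \<le> w x" using wp[of x] by simp
  qed
  have I10: "integral {a..b} (\<lambda>r. 1 / w r) \<ge> 0" if "0 \<le> a" for a b
  proof (rule integral_nonneg[OF i1[OF that]])
    fix x assume "x \<in> {a..b}" then have "x \<ge> 0" using that by auto
    then show "0 \<le> 1 / w x" using wp[of x] by simp
  qed
  have Wmono: "W a \<le> W b" if "0 \<le> a" "a \<le> b" for a b using Wsplit[OF that] Iw0[OF that(1)] by simp
  have Pmono: "Phi a \<le> Phi b" if "0 \<le> a" "a \<le> b" for a b using Psplit[OF that] I10[OF that(1)] by simp
  have Pnn: "Phi a \<ge> 0" if "0 \<le> a" for a using Pmono[of 0 a] that unfolding Phi_def by simp
  have PB: "Phi R \<le> B" if "R \<ge> 0" for R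
  proof -
    have "Phi R \<le> Phi (max R (s0+1))" by (rule Pmono) (use that in auto)
    also have "\<dots> \<le> B" unfolding Phi_def by (rule nb) auto
    finally show ?thesis .
  qed
  \<comment> \<open>AM-GM / Cauchy-Schwarz\<close>
  have CS: "integral {a..b} w * (Phi b - Phi a) \<ge> (b - a)^2" if ab: "0 \<le> a" "a < b" for a b
  proof -
    define I where "I = integral {a..b} w"
    define D where "D = Phi b - Phi a"
    have Dint: "D = integral {a..b} (\<lambda>r. 1 / w r)" unfolding D_def using Psplit[of a b] ab by simp
    have key: "I + l^2 * D \<ge> 2 * l * (b - a)" if l: "l > 0" for l
    proof -
      have "integral {a..b} (\<lambda>x. 2 * l) \<le> integral {a..b} (\<lambda>x. w x + l^2 * (1 / w x))"
      proof (rule integral_le)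
        show "(\<lambda>x. 2 * l) integrable_on {a..b}" by (intro integrable_continuous_real continuous_intros)
        show "(\<lambda>x. w x + l^2 * (1 / w x)) integrable_on {a..b}"
          by (intro integrable_continuous_real continuous_on_add continuous_on_mult continuous_on_const cw[OF ab(1)] c1[OF ab(1)])
        fix x assume "x \<in> {a..b}"
        then have wx: "w x > 0" using wp ab by auto
        have "0 \<le> (w x - l)^2 / w x" using wx by simp
        also have "\<dots> = w x + l^2 * (1 / w x) - 2 * l" using wx by (simp add: field_simps power2_eq_square)
        finally show "2 * l \<le> w x + l^2 * (1 / w x)" by simp
      qed
      also have "\<dots> = I + l^2 * D"
      proof -
        have int2: "(\<lambda>x. l^2 * (1 / w x)) integrable_on {a..b}"
          by (intro integrable_continuous_real continuous_on_mult continuous_on_const c1[OF ab(1)])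
        have "integral {a..b} (\<lambda>x. w x + l^2 * (1 / w x)) = integral {a..b} w + integral {a..b} (\<lambda>x. l^2 * (1 / w x))"
          by (rule integral_add[OF iw[OF ab(1)] int2])
        also have "integral {a..b} (\<lambda>x. l^2 * (1 / w x)) = l^2 * integral {a..b} (\<lambda>x. 1 / w x)"
          by (rule integral_mult_right)
        finally show ?thesis unfolding I_def Dint .
      qed
      finally show ?thesis using ab by (simp add: content_real algebra_simps)
    qed
    have I0: "I \<ge> 0" unfolding I_def by (rule Iw0[OF ab(1)])
    have D0: "D \<ge> 0" unfolding Dint by (rule I10[OF ab(1)])
    have "D \<noteq> 0"
    proof
      assume "D = 0"
      have "I \<ge> 2 * ((I + 1) / (2 * (b - a))) * (b - a)"
        using key[of "(I + 1) / (2 * (b - a))"] \<open>D = 0\<close> I0 ab by simp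
      moreover have "2 * ((I + 1) / (2 * (b - a))) * (b - a) = I + 1" using ab by (simp add: field_simps)
      ultimately show False by simp
    qed
    hence Dp: "D > 0" using D0 by simp
    define L where "L = b - a"
    have k: "I + (L/D)^2 * D \<ge> 2 * (L/D) * L"
      using key[of "L/D"] ab Dp unfolding L_def by simp
    have e1: "(L/D)^2 * D = L^2/D" using Dp by (simp add: power2_eq_square)
    have e2: "2 * (L/D) * L = 2 * (L^2/D)" by (simp add: power2_eq_square)
    have "I \<ge> L^2 / D" using k e1 e2 by linarith
    hence "I * D \<ge> (b - a)^2" using Dp unfolding L_def by (simp add: pos_divide_le_eq)
    then show ?thesis unfolding I_def D_def .
  qed
  define c where "c x = 8 * (Phi x - Phi (x/2)) / x" for x :: real
  have pt: "t / W t \<le> c x" if x: "x \<ge> 1" "x \<le> t" "t \<le> 2 * x" for x t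
  proof -
    define I where "I = integral {x/2..x} w"
    define D where "D = Phi x - Phi (x/2)"
    have ID: "I * D \<ge> (x/2)^2" using CS[of "x/2" x] x unfolding I_def D_def by simp
    have I0: "I \<ge> 0" unfolding I_def by (rule Iw0) (use x in simp)
    have D0: "D \<ge> 0" unfolding D_def using Pmono[of "x/2" x] x by simp
    have Ip: "I > 0" using ID I0 x by (cases "I = 0") auto
    have Dp: "D > 0" using ID D0 x by (cases "D = 0") auto
    have "W t \<ge> W x" by (rule Wmono) (use x in auto)
    moreover have "W x = W (x/2) + I" unfolding I_def by (rule Wsplit) (use x in auto)
    moreover have "W (x/2) \<ge> 0" unfolding W_def by (rule Iw0) simp
    ultimately have WI: "W t \<ge> I" by simp
    have "t / W t \<le> (2 * x) / I"
      using WI Ip x by (intro frac_le) auto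
    also have "\<dots> = 2 * x * D / (I * D)" using Dp by simp
    also have "\<dots> \<le> 2 * x * D / ((x/2)^2)"
      using ID Dp Ip x by (intro divide_left_mono) auto
    also have "\<dots> = c x" unfolding c_def D_def using x by (simp add: field_simps power2_eq_square)
    finally show ?thesis .
  qed
  define g where "g k t = ennreal (c (2^k)) * indicator {(2::real)^k..<2^(k+1)} t" for k :: nat and t
  have cnn: "c x \<ge> 0" if "x \<ge> 1" for x
    unfolding c_def using Pmono[of "x/2" x] that by auto
  have le1: "ennreal (t / W t) * indicator {1..} t \<le> (\<Sum>k. g k t)" for t
  proof (cases "t \<ge> 1")
    case True
    then obtain k :: nat where k: "2^k \<le> t" "t < 2^(k+1)" using pow2_ivl by blast
    have "ennreal (t / W t) * indicator {1..} t = ennreal (t / W t)" using True by simp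
    also have "\<dots> \<le> ennreal (c (2^k))" by (intro ennreal_leI pt) (use k in auto)
    also have "\<dots> = g k t" unfolding g_def using k by simp
    also have "\<dots> = (\<Sum>i\<in>{k}. g i t)" by simp
    also have "\<dots> \<le> (\<Sum>i. g i t)" by (rule sum_le_suminf) auto
    finally show ?thesis .
  qed simp
  have "(\<integral>\<^sup>+ t\<in>{1..}. ennreal (t / integral {0..t} w) \<partial>lborel) \<le> (\<integral>\<^sup>+ t. (\<Sum>k. g k t) \<partial>lborel)"
    by (rule nn_integral_mono) (use le1 in \<open>simp add: W_def\<close>)
  also have "\<dots> = (\<Sum>k. \<integral>\<^sup>+ t. g k t \<partial>lborel)"
    by (rule nn_integral_suminf) (simp add: g_def)
  also have "\<dots> = (\<Sum>k. ennreal (8 * (Phi (2^k) - Phi (2^k/2))))"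
  proof (rule suminf_cong)
    fix k :: nat
    have "(\<integral>\<^sup>+ t. g k t \<partial>lborel) = ennreal (c (2^k)) * emeasure lborel {(2::real)^k..<2^(k+1)}"
      unfolding g_def by (rule nn_integral_cmult_indicator) simp
    also have "\<dots> = ennreal (c (2^k)) * ennreal (2^k)" by simp
    also have "\<dots> = ennreal (c (2^k) * 2^k)" by (rule ennreal_mult[symmetric]) (auto intro: cnn)
    also have "c (2^k) * 2^k = 8 * (Phi (2^k) - Phi (2^k/2))" unfolding c_def by simp
    finally show "(\<integral>\<^sup>+ t. g k t \<partial>lborel) = ennreal (8 * (Phi (2^k) - Phi (2^k/2)))" .
  qed
  also have "\<dots> \<le> ennreal (8 * B)"
  proof (rule suminf_le_const)
    show "summable (\<lambda>k. ennreal (8 * (Phi (2^k) - Phi (2^k/2))))" by (rule summableI)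
    fix n
    have "(\<Sum>k<n. ennreal (8 * (Phi (2^k) - Phi (2^k/2)))) = ennreal (\<Sum>k<n. 8 * (Phi (2^k) - Phi (2^k/2)))"
      by (rule sum_ennreal) (use Pmono in auto)
    also have "(\<Sum>k<n. 8 * (Phi (2^k) - Phi (2^k/2))) = 8 * (\<Sum>k<n. Phi (2^(Suc k)/2) - Phi (2^k/2))"
      by (simp add: sum_distrib_left)
    also have "\<dots> = 8 * (Phi (2^n/2) - Phi (1/2))" by (subst sum_lessThan_telescope) simp
    also have "\<dots> \<le> 8 * B" using PB[of "2^n/2"] Pnn[of "1/2"] by simp
    finally show "(\<Sum>k<n. ennreal (8 * (Phi (2^k) - Phi (2^k/2)))) \<le> ennreal (8 * B)"
      by (simp add: ennreal_leI)
  qed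
  finally show False using dv by (simp add: top_unique)
qed


lemma harm_diff:
  assumes hu: "bdd_harmonic_end w u" and hv: "bdd_harmonic_end w v"
  shows "bdd_harmonic_end w (\<lambda>p. u p - v p)"
proof -
  have cu: "continuous_on ({0..} \<times> UNIV) u" and pu: "\<forall>s\<ge>0. \<forall>\<theta>. u (s, \<theta> + 2 * pi) = u (s, \<theta>)"
    and bu: "bounded (u ` ({0..} \<times> UNIV))" and harmu: "harmonic_end w u"
    using hu unfolding bdd_harmonic_end_def by auto
  have cv: "continuous_on ({0..} \<times> UNIV) v" and pv: "\<forall>s\<ge>0. \<forall>\<theta>. v (s, \<theta> + 2 * pi) = v (s, \<theta>)"
    and bv: "bounded (v ` ({0..} \<times> UNIV))" and harmv: "harmonic_end w v"
    using hv unfolding bdd_harmonic_end_def by auto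
  obtain Mu where Mu: "\<And>x. x\<in>{0..} \<times> UNIV \<Longrightarrow> \<bar>u x\<bar> \<le> Mu"
    using bu unfolding bounded_iff by auto
  obtain Mv where Mv: "\<And>x. x\<in>{0..} \<times> UNIV \<Longrightarrow> \<bar>v x\<bar> \<le> Mv"
    using bv unfolding bounded_iff by auto
  have bd: "bounded ((\<lambda>p. u p - v p) ` ({0..} \<times> UNIV))"
    unfolding bounded_iff
  proof (intro exI ballI)
    fix y assume "y \<in> (\<lambda>p. u p - v p) ` ({0..} \<times> UNIV)"
    then obtain x where x: "x \<in> {0..} \<times> UNIV" "y = u x - v x" by auto
    show "norm y \<le> Mu + Mv" using Mu[OF x(1)] Mv[OF x(1)] x(2) by simp
  qed
  from harmu obtain us ut uss ust utt where
    U: "continuous_on ({0<..} \<times> UNIV) us" "continuous_on ({0<..} \<times> UNIV) ut"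
       "continuous_on ({0<..} \<times> UNIV) uss" "continuous_on ({0<..} \<times> UNIV) ust"
       "continuous_on ({0<..} \<times> UNIV) utt" and
    HU: "\<forall>s>0. \<forall>\<theta>.
          ((\<lambda>r. u (r, \<theta>)) has_real_derivative us (s, \<theta>)) (at s) \<and>
          ((\<lambda>t. u (s, t)) has_real_derivative ut (s, \<theta>)) (at \<theta>) \<and>
          ((\<lambda>r. us (r, \<theta>)) has_real_derivative uss (s, \<theta>)) (at s) \<and>
          ((\<lambda>t. us (s, t)) has_real_derivative ust (s, \<theta>)) (at \<theta>) \<and>
          ((\<lambda>r. ut (r, \<theta>)) has_real_derivative ust (s, \<theta>)) (at s) \<and>
          ((\<lambda>t. ut (s, t)) has_real_derivative utt (s, \<theta>)) (at \<theta>) \<and>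
          ((\<lambda>r. w r * us (r, \<theta>)) has_real_derivative (- utt (s, \<theta>) / w s)) (at s)"
    unfolding harmonic_end_def by blast
  from harmv obtain vs vt vss vst vtt where
    V: "continuous_on ({0<..} \<times> UNIV) vs" "continuous_on ({0<..} \<times> UNIV) vt"
       "continuous_on ({0<..} \<times> UNIV) vss" "continuous_on ({0<..} \<times> UNIV) vst"
       "continuous_on ({0<..} \<times> UNIV) vtt" and
    HV: "\<forall>s>0. \<forall>\<theta>.
          ((\<lambda>r. v (r, \<theta>)) has_real_derivative vs (s, \<theta>)) (at s) \<and>
          ((\<lambda>t. v (s, t)) has_real_derivative vt (s, \<theta>)) (at \<theta>) \<and>
          ((\<lambda>r. vs (r, \<theta>)) has_real_derivative vss (s, \<theta>)) (at s) \<and>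
          ((\<lambda>t. vs (s, t)) has_real_derivative vst (s, \<theta>)) (at \<theta>) \<and>
          ((\<lambda>r. vt (r, \<theta>)) has_real_derivative vst (s, \<theta>)) (at s) \<and>
          ((\<lambda>t. vt (s, t)) has_real_derivative vtt (s, \<theta>)) (at \<theta>) \<and>
          ((\<lambda>r. w r * vs (r, \<theta>)) has_real_derivative (- vtt (s, \<theta>) / w s)) (at s)"
    unfolding harmonic_end_def by blast
  have "harmonic_end w (\<lambda>p. u p - v p)"
    unfolding harmonic_end_def
  proof (rule exI[of _ "\<lambda>p. us p - vs p"], rule exI[of _ "\<lambda>p. ut p - vt p"], rule exI[of _ "\<lambda>p. uss p - vss p"],
      rule exI[of _ "\<lambda>p. ust p - vst p"], rule exI[of _ "\<lambda>p. utt p - vtt p"], intro conjI allI impI)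
    show "continuous_on ({0<..} \<times> UNIV) (\<lambda>p. us p - vs p)" using U V by (intro continuous_on_diff)
    show "continuous_on ({0<..} \<times> UNIV) (\<lambda>p. ut p - vt p)" using U V by (intro continuous_on_diff)
    show "continuous_on ({0<..} \<times> UNIV) (\<lambda>p. uss p - vss p)" using U V by (intro continuous_on_diff)
    show "continuous_on ({0<..} \<times> UNIV) (\<lambda>p. ust p - vst p)" using U V by (intro continuous_on_diff)
    show "continuous_on ({0<..} \<times> UNIV) (\<lambda>p. utt p - vtt p)" using U V by (intro continuous_on_diff)
    fix s :: real and \<theta> :: real assume s: "s > 0"
    note A = HU[rule_format, OF s, of \<theta>] and B = HV[rule_format, OF s, of \<theta>]
    show "((\<lambda>r. u (r, \<theta>) - v (r, \<theta>)) has_real_derivative us (s, \<theta>) - vs (s, \<theta>)) (at s)"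
      using A B by (intro DERIV_diff) auto
    show "((\<lambda>t. u (s, t) - v (s, t)) has_real_derivative ut (s, \<theta>) - vt (s, \<theta>)) (at \<theta>)"
      using A B by (intro DERIV_diff) auto
    show "((\<lambda>r. us (r, \<theta>) - vs (r, \<theta>)) has_real_derivative uss (s, \<theta>) - vss (s, \<theta>)) (at s)"
      using A B by (intro DERIV_diff) auto
    show "((\<lambda>t. us (s, t) - vs (s, t)) has_real_derivative ust (s, \<theta>) - vst (s, \<theta>)) (at \<theta>)"
      using A B by (intro DERIV_diff) auto
    show "((\<lambda>r. ut (r, \<theta>) - vt (r, \<theta>)) has_real_derivative ust (s, \<theta>) - vst (s, \<theta>)) (at s)"
      using A B by (intro DERIV_diff) auto
    show "((\<lambda>t. ut (s, t) - vt (s, t)) has_real_derivative utt (s, \<theta>) - vtt (s, \<theta>)) (at \<theta>)"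
      using A B by (intro DERIV_diff) auto
    have "((\<lambda>r. w r * us (r, \<theta>) - w r * vs (r, \<theta>)) has_real_derivative
        (- utt (s, \<theta>) / w s) - (- vtt (s, \<theta>) / w s)) (at s)"
      using A B by (intro DERIV_diff) auto
    moreover have "(\<lambda>r. w r * us (r, \<theta>) - w r * vs (r, \<theta>)) = (\<lambda>r. w r * (us (r, \<theta>) - vs (r, \<theta>)))"
      by (simp add: right_diff_distrib)
    moreover have "(- utt (s, \<theta>) / w s) - (- vtt (s, \<theta>) / w s) = - (utt (s, \<theta>) - vtt (s, \<theta>)) / w s"
      by (simp add: diff_divide_distrib)
    ultimately show "((\<lambda>r. w r * (us (r, \<theta>) - vs (r, \<theta>))) has_real_derivative
        - (utt (s, \<theta>) - vtt (s, \<theta>)) / w s) (at s)" by simp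
  qed
  then show ?thesis unfolding bdd_harmonic_end_def
    using cu cv pu pv bd by (auto intro: continuous_on_diff)
qed

lemma smooth_cont:
  assumes "smooth_on {0..} g D" shows "continuous_on {0..} g"
proof -
  have g: "D 0 = g" and d: "\<forall>x\<in>{0..}. (D 0 has_real_derivative D (Suc 0) x) (at x within {0..})"
    using assms unfolding smooth_on_def by auto
  show ?thesis unfolding continuous_on_eq_continuous_within
    using d g by (auto dest: DERIV_continuous)
qed

theorem corollary2p17:
  fixes \<kappa> :: int and \<gamma>1 \<gamma>2 :: "real \<Rightarrow> real" and D1 D2 :: "nat \<Rightarrow> real \<Rightarrow> real"
  assumes kappa: "\<kappa> \<in> {-1, 0, 1}"
    and smooth1: "smooth_on {0..} \<gamma>1 D1"
    and smooth2: "smooth_on {0..} \<gamma>2 D2"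
    and pos1: "\<forall>s\<ge>0. \<gamma>1 s > 0"
    and halfspace: "\<kappa> = -1 \<Longrightarrow> \<forall>s\<ge>0. \<gamma>2 s > 0"
    and arclength: "\<forall>s\<ge>0. eta \<kappa> (\<gamma>1 s) 0 (\<gamma>2 s) * ((D1 1 s)^2 + (D2 1 s)^2) = 1"
    and divergent: "(\<integral>\<^sup>+ t\<in>{1..}. ennreal (t / integral {0..t} (wk \<kappa> \<gamma>1 \<gamma>2)) \<partial>lborel) = \<infinity>"
  shows "parabolic_end (wk \<kappa> \<gamma>1 \<gamma>2)"
proof -
  define w where "w = wk \<kappa> \<gamma>1 \<gamma>2"
  have c1: "continuous_on {0..} \<gamma>1" by (rule smooth_cont[OF smooth1])
  have c2: "continuous_on {0..} \<gamma>2" by (rule smooth_cont[OF smooth2])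
  have wc: "continuous_on {0..} w" and wp: "\<And>s. s \<ge> 0 \<Longrightarrow> w s > 0"
  proof -
    consider "\<kappa> = -1" | "\<kappa> = 0" | "\<kappa> \<noteq> -1 \<and> \<kappa> \<noteq> 0" by blast
    then have "continuous_on {0..} w \<and> (\<forall>s\<ge>0. w s > 0)"
    proof cases
      case 1
      then have p2: "\<forall>s\<ge>0. \<gamma>2 s > 0" using halfspace by blast
      have we: "w = (\<lambda>s. \<gamma>1 s / \<gamma>2 s)" unfolding w_def wk_def using 1 by (auto simp: fun_eq_iff)
      have "continuous_on {0..} w" unfolding we
        by (intro continuous_on_divide c1 c2) (use p2 in \<open>auto simp: less_imp_neq[symmetric]\<close>)
      moreover have "\<forall>s\<ge>0. w s > 0" unfolding we using pos1 p2 by auto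
      ultimately show ?thesis by blast
    next
      case 2
      have we: "w = \<gamma>1" unfolding w_def wk_def using 2 by (auto simp: fun_eq_iff)
      show ?thesis unfolding we using c1 pos1 by blast
    next
      case 3
      have we: "w = (\<lambda>s. 2 * \<gamma>1 s / (1 + (\<gamma>1 s)^2 + (\<gamma>2 s)^2))" unfolding w_def wk_def using 3
        by (auto simp: fun_eq_iff)
      have dp: "\<And>s. 1 + (\<gamma>1 s)^2 + (\<gamma>2 s)^2 > 0" by (simp add: add_pos_nonneg)
      have "continuous_on {0..} w" unfolding we
        by (intro continuous_on_divide continuous_intros c1 c2) (use dp in \<open>auto simp: less_imp_neq[symmetric]\<close>)
      moreover have "\<forall>s\<ge>0. w s > 0" unfolding we using pos1 dp by auto
      ultimately show ?thesis by blast
    qed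
    then show "continuous_on {0..} w" "\<And>s. s \<ge> 0 \<Longrightarrow> w s > 0" by auto
  qed
  have unb: "\<And>B s0. \<exists>R>s0. integral {0..R} (\<lambda>r. 1 / w r) > B"
    by (rule div_unb[OF wc wp]) (use divergent w_def in auto)
  show ?thesis unfolding w_def[symmetric] parabolic_end_def
  proof (intro allI impI)
    fix u v s \<theta> assume hu: "bdd_harmonic_end w u" and hv: "bdd_harmonic_end w v"
      and b: "\<forall>\<theta>. u (0, \<theta>) = v (0, \<theta>)" and s: "0 \<le> (s::real)"
    have b1: "\<And>\<theta>. u (0, \<theta>) - v (0, \<theta>) = 0" using b by simp
    have b2: "\<And>\<theta>. v (0, \<theta>) - u (0, \<theta>) = 0" using b by simp
    have "(\<lambda>p. u p - v p) (s, \<theta>) \<le> 0"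
      by (rule mp[OF wc wp unb harm_diff[OF hu hv] b1 s])
    moreover have "(\<lambda>p. v p - u p) (s, \<theta>) \<le> 0"
      by (rule mp[OF wc wp unb harm_diff[OF hv hu] b2 s])
    ultimately show "u (s, \<theta>) = v (s, \<theta>)" by simp
  qed
qed

end
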